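(* Let $T$ be a tree with $ex(T)\ge1$, and let $g:V(T)\rightarrow [0,1]$ be any minimum resolving function of $T$. If $x$ is a major vertex, an interior degree-two vertex, or a vertex belonging to $T_v$ for some $v\in M_1(T)$, then $g(x)=0$.
   Context: $d(x,y)$ is the distance in the tree. For a function $g$ on $V(T)$ and $U\subseteq V(T)$, $g(U)=\sum_{s\in U}g(s)$. $R\{x,y\}=\{z: d(x,z)\ne d(y,z)\}$; $g:V(T)\to[0,1]$ is a resolving function if $g(R\{x,y\})\ge1$ for all distinct $x,y$; $\dim_f(T)$ is the minimum of $g(V(T))$ over resolving functions, and a minimum resolving function attains it. A leaf has degree one; a major vertex has degree at least three. A leaf $\ell$ is a terminal vertex of a major vertex $v$ if $d(\ell,v)<d(\ell,w)$ for every other major vertex $w$; $ter(v)$ is the number of terminal vertices of $v$; an exterior major vertex is a major vertex with $ter(v)>0$. $M(T)$ is the set of exterior major vertices, $ex(T)=|M(T)|$, $M_1(T)=\{w\in M(T): ter(w)=1\}$. For $v\in M(T)$, $T_v$ is the subtree induced by $v$ and all vertices on the paths joining $v$ to its terminal vertices. An interior degree-two vertex is a vertex of degree $2$ such that the shortest path from it to any terminal vertex includes a major vertex. *)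

theory Defs
  imports "HOL-Analysis.Analysis"
begin

definition walk :: "'a set \<Rightarrow> ('a \<Rightarrow> 'a \<Rightarrow> bool) \<Rightarrow> 'a list \<Rightarrow> bool" where
  "walk V E xs \<longleftrightarrow> xs \<noteq> [] \<and> set xs \<subseteq> V \<and>
     (\<forall>i. Suc i < length xs \<longrightarrow> E (xs ! i) (xs ! Suc i))"

definition path :: "'a set \<Rightarrow> ('a \<Rightarrow> 'a \<Rightarrow> bool) \<Rightarrow> 'a \<Rightarrow> 'a \<Rightarrow> 'a list \<Rightarrow> bool" where
  "path V E u v xs \<longleftrightarrow> walk V E xs \<and> distinct xs \<and> hd xs = u \<and> last xs = v"

definition connected_graph :: "'a set \<Rightarrow> ('a \<Rightarrow> 'a \<Rightarrow> bool) \<Rightarrow> bool" where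
  "connected_graph V E \<longleftrightarrow> (\<forall>u\<in>V. \<forall>v\<in>V. \<exists>xs. path V E u v xs)"

definition acyclic_graph :: "'a set \<Rightarrow> ('a \<Rightarrow> 'a \<Rightarrow> bool) \<Rightarrow> bool" where
  "acyclic_graph V E \<longleftrightarrow> \<not> (\<exists>xs. walk V E xs \<and> distinct xs \<and> length xs \<ge> 3 \<and> E (last xs) (hd xs))"

definition is_tree :: "'a set \<Rightarrow> ('a \<Rightarrow> 'a \<Rightarrow> bool) \<Rightarrow> bool" where
  "is_tree V E \<longleftrightarrow> finite V \<and> V \<noteq> {} \<and>
     (\<forall>u v. E u v \<longrightarrow> u \<in> V \<and> v \<in> V) \<and>
     (\<forall>u v. E u v \<longrightarrow> E v u) \<and> (\<forall>u. \<not> E u u) \<and>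
     connected_graph V E \<and> acyclic_graph V E"

definition dist_g :: "'a set \<Rightarrow> ('a \<Rightarrow> 'a \<Rightarrow> bool) \<Rightarrow> 'a \<Rightarrow> 'a \<Rightarrow> nat" where
  "dist_g V E x y = (LEAST n. \<exists>xs. walk V E xs \<and> hd xs = x \<and> last xs = y \<and> length xs = Suc n)"

definition degree :: "'a set \<Rightarrow> ('a \<Rightarrow> 'a \<Rightarrow> bool) \<Rightarrow> 'a \<Rightarrow> nat" where
  "degree V E v = card {w \<in> V. E v w}"

definition leaf :: "'a set \<Rightarrow> ('a \<Rightarrow> 'a \<Rightarrow> bool) \<Rightarrow> 'a \<Rightarrow> bool" where
  "leaf V E v \<longleftrightarrow> v \<in> V \<and> degree V E v = 1"

definition major :: "'a set \<Rightarrow> ('a \<Rightarrow> 'a \<Rightarrow> bool) \<Rightarrow> 'a \<Rightarrow> bool" where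
  "major V E v \<longleftrightarrow> v \<in> V \<and> degree V E v \<ge> 3"

definition terminal_of :: "'a set \<Rightarrow> ('a \<Rightarrow> 'a \<Rightarrow> bool) \<Rightarrow> 'a \<Rightarrow> 'a \<Rightarrow> bool" where
  "terminal_of V E v l \<longleftrightarrow> major V E v \<and> leaf V E l \<and>
     (\<forall>w. major V E w \<and> w \<noteq> v \<longrightarrow> dist_g V E l v < dist_g V E l w)"

definition ter :: "'a set \<Rightarrow> ('a \<Rightarrow> 'a \<Rightarrow> bool) \<Rightarrow> 'a \<Rightarrow> nat" where
  "ter V E v = card {l. terminal_of V E v l}"

definition ext_major :: "'a set \<Rightarrow> ('a \<Rightarrow> 'a \<Rightarrow> bool) \<Rightarrow> 'a set" where
  "ext_major V E = {v. major V E v \<and> ter V E v > 0}"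

definition ex_num :: "'a set \<Rightarrow> ('a \<Rightarrow> 'a \<Rightarrow> bool) \<Rightarrow> nat" where
  "ex_num V E = card (ext_major V E)"

definition M1 :: "'a set \<Rightarrow> ('a \<Rightarrow> 'a \<Rightarrow> bool) \<Rightarrow> 'a set" where
  "M1 V E = {w \<in> ext_major V E. ter V E w = 1}"

definition T_sub :: "'a set \<Rightarrow> ('a \<Rightarrow> 'a \<Rightarrow> bool) \<Rightarrow> 'a \<Rightarrow> 'a set" where
  "T_sub V E v = {v} \<union> {z. \<exists>l xs. terminal_of V E v l \<and> path V E v l xs \<and> z \<in> set xs}"

definition interior_deg2 :: "'a set \<Rightarrow> ('a \<Rightarrow> 'a \<Rightarrow> bool) \<Rightarrow> 'a \<Rightarrow> bool" where
  "interior_deg2 V E x \<longleftrightarrow> x \<in> V \<and> degree V E x = 2 \<and>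
     (\<forall>v l xs. terminal_of V E v l \<and> path V E x l xs \<and> length xs = Suc (dist_g V E x l)
        \<longrightarrow> (\<exists>z\<in>set xs. major V E z))"

definition resolving_set :: "'a set \<Rightarrow> ('a \<Rightarrow> 'a \<Rightarrow> bool) \<Rightarrow> 'a \<Rightarrow> 'a \<Rightarrow> 'a set" where
  "resolving_set V E x y = {z \<in> V. dist_g V E x z \<noteq> dist_g V E y z}"

definition resolving_function :: "'a set \<Rightarrow> ('a \<Rightarrow> 'a \<Rightarrow> bool) \<Rightarrow> ('a \<Rightarrow> real) \<Rightarrow> bool" where
  "resolving_function V E g \<longleftrightarrow> (\<forall>v\<in>V. 0 \<le> g v \<and> g v \<le> 1) \<and>
     (\<forall>x\<in>V. \<forall>y\<in>V. x \<noteq> y \<longrightarrow> sum g (resolving_set V E x y) \<ge> 1)"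

definition frac_dim :: "'a set \<Rightarrow> ('a \<Rightarrow> 'a \<Rightarrow> bool) \<Rightarrow> real" where
  "frac_dim V E = Inf {sum g V | g. resolving_function V E g}"

definition min_resolving_function :: "'a set \<Rightarrow> ('a \<Rightarrow> 'a \<Rightarrow> bool) \<Rightarrow> ('a \<Rightarrow> real) \<Rightarrow> bool" where
  "min_resolving_function V E g \<longleftrightarrow> resolving_function V E g \<and> sum g V = frac_dim V E"

end

theory Submission
  imports Defs
begin

locale tr =
  fixes V :: "'a set" and E :: "'a \<Rightarrow> 'a \<Rightarrow> bool"
  assumes tree: "is_tree V E"
begin

abbreviation d where "d \<equiv> dist_g V E"

lemma finV: "finite V" using tree by (simp add: is_tree_def)
lemma EV: "E u v \<Longrightarrow> u \<in> V \<and> v \<in> V" using tree by (simp add: is_tree_def)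
lemma Esym: "E u v \<Longrightarrow> E v u" using tree by (simp add: is_tree_def)
lemma Eirr: "\<not> E u u" using tree by (simp add: is_tree_def)
lemma conn: "u \<in> V \<Longrightarrow> v \<in> V \<Longrightarrow> \<exists>xs. path V E u v xs"
  using tree by (simp add: is_tree_def connected_graph_def)
lemma acyc: "walk V E xs \<Longrightarrow> distinct xs \<Longrightarrow> length xs \<ge> 3 \<Longrightarrow> E (last xs) (hd xs) \<Longrightarrow> False"
  using tree by (auto simp add: is_tree_def acyclic_graph_def)

lemma walk_single: "walk V E [x] \<longleftrightarrow> x \<in> V" by (auto simp: walk_def)

lemma walk_Cons2: "walk V E (x # y # xs) \<longleftrightarrow> x \<in> V \<and> E x y \<and> walk V E (y # xs)"
proof
  assume w: "walk V E (x # y # xs)"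
  have "E x y" using w unfolding walk_def by (metis One_nat_def length_Cons nth_Cons_0 nth_Cons_Suc zero_less_Suc Suc_less_eq)
  moreover have "walk V E (y # xs)" unfolding walk_def
  proof (intro conjI allI impI)
    fix i assume "Suc i < length (y # xs)"
    then have "Suc (Suc i) < length (x # y # xs)" by simp
    then show "E ((y # xs) ! i) ((y # xs) ! Suc i)" using w unfolding walk_def
      by (metis nth_Cons_Suc)
  qed (use w in \<open>auto simp: walk_def\<close>)
  ultimately show "x \<in> V \<and> E x y \<and> walk V E (y # xs)" using w by (auto simp: walk_def)
next
  assume a: "x \<in> V \<and> E x y \<and> walk V E (y # xs)"
  show "walk V E (x # y # xs)" unfolding walk_def
  proof (intro conjI allI impI)
    fix i assume i: "Suc i < length (x # y # xs)"
    show "E ((x # y # xs) ! i) ((x # y # xs) ! Suc i)"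
    proof (cases i)
      case 0 then show ?thesis using a by simp
    next
      case (Suc j)
      then have "Suc j < length (y # xs)" using i by simp
      then show ?thesis using a Suc unfolding walk_def by simp
    qed
  qed (use a in \<open>auto simp: walk_def\<close>)
qed

lemma walk_Nil: "\<not> walk V E []" by (simp add: walk_def)

lemma walk_V: "walk V E xs \<Longrightarrow> set xs \<subseteq> V" by (simp add: walk_def)

lemma walk_append: "walk V E xs \<Longrightarrow> walk V E ys \<Longrightarrow> E (last xs) (hd ys) \<Longrightarrow> walk V E (xs @ ys)"
proof (induction xs rule: induct_list012)
  case 1 then show ?case by (simp add: walk_def)
next
  case (2 x) then show ?case
    by (cases ys) (auto simp: walk_Cons2 walk_single walk_Nil)
next
  case (3 x y zs)
  then have "walk V E (y # zs)" "x \<in> V" "E x y" by (auto simp: walk_Cons2)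
  then show ?case using 3 by (auto simp: walk_Cons2)
qed

lemma walk_join: "walk V E xs \<Longrightarrow> walk V E ys \<Longrightarrow> last xs = hd ys \<Longrightarrow> walk V E (xs @ tl ys)"
proof (cases "tl ys")
  case Nil
  assume "walk V E xs" then show ?thesis using Nil by simp
next
  case (Cons z zs)
  assume a: "walk V E xs" "walk V E ys" "last xs = hd ys"
  have ys: "ys = hd ys # z # zs" using Cons a(2) by (metis list.collapse walk_def)
  then have "walk V E (z # zs)" "E (hd ys) z" using a(2) walk_Cons2 by metis+
  then show ?thesis using a Cons walk_append by auto
qed

lemma walk_take: "walk V E xs \<Longrightarrow> 0 < n \<Longrightarrow> walk V E (take n xs)"
  unfolding walk_def by (auto dest: in_set_takeD)

lemma walk_drop: "walk V E xs \<Longrightarrow> n < length xs \<Longrightarrow> walk V E (drop n xs)"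
  unfolding walk_def by (auto dest: in_set_dropD)

lemma walk_rev: "walk V E xs \<Longrightarrow> walk V E (rev xs)"
  unfolding walk_def
proof (intro conjI allI impI)
  fix i assume w: "xs \<noteq> [] \<and> set xs \<subseteq> V \<and> (\<forall>i. Suc i < length xs \<longrightarrow> E (xs ! i) (xs ! Suc i))"
    and i: "Suc i < length (rev xs)"
  define j where "j = length xs - Suc (Suc i)"
  have "Suc j < length xs" using i by (simp add: j_def)
  then have "E (xs ! j) (xs ! Suc j)" using w by blast
  moreover have "rev xs ! i = xs ! Suc j" "rev xs ! Suc i = xs ! j" using i
    by (auto simp: rev_nth j_def Suc_diff_Suc)
  ultimately show "E (rev xs ! i) (rev xs ! Suc i)" using Esym by simp
qed auto

lemma dist_le: "walk V E xs \<Longrightarrow> hd xs = x \<Longrightarrow> last xs = y \<Longrightarrow> d x y \<le> length xs - 1"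
proof -
  assume a: "walk V E xs" "hd xs = x" "last xs = y"
  then have "length xs = Suc (length xs - 1)" by (cases xs) (auto simp: walk_Nil)
  then show ?thesis unfolding dist_g_def using a by (intro Least_le) blast
qed

definition geo where "geo xs x y \<longleftrightarrow> walk V E xs \<and> hd xs = x \<and> last xs = y \<and> length xs = Suc (d x y)"

lemma geo_ex: "x \<in> V \<Longrightarrow> y \<in> V \<Longrightarrow> \<exists>xs. geo xs x y"
proof -
  assume "x \<in> V" "y \<in> V"
  then obtain xs where "path V E x y xs" using conn by blast
  then have "\<exists>n xs. walk V E xs \<and> hd xs = x \<and> last xs = y \<and> length xs = Suc n"
    unfolding path_def by (metis Suc_pred length_greater_0_conv walk_def)
  then show ?thesis unfolding geo_def dist_g_def by (rule LeastI_ex)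
qed

lemma geo_walk: "geo xs x y \<Longrightarrow> walk V E xs" by (simp add: geo_def)

lemma d_refl: "x \<in> V \<Longrightarrow> d x x = 0"
  using dist_le[of "[x]" x x] by (simp add: walk_single)

lemma d_tri: "x \<in> V \<Longrightarrow> y \<in> V \<Longrightarrow> z \<in> V \<Longrightarrow> d x z \<le> d x y + d y z"
proof -
  assume a: "x \<in> V" "y \<in> V" "z \<in> V"
  obtain xs where xs: "geo xs x y" using geo_ex a by blast
  obtain ys where ys: "geo ys y z" using geo_ex a by blast
  have w: "walk V E (xs @ tl ys)" using xs ys walk_join by (simp add: geo_def)
  have "ys \<noteq> []" using ys by (auto simp: geo_def)
  have l: "last (xs @ tl ys) = z"
  proof (cases "tl ys = []")
    case True
    then have "ys = [hd ys]" using \<open>ys \<noteq> []\<close> by (metis list.collapse)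
    then show ?thesis using xs ys True by (simp add: geo_def)
  next
    case False
    then show ?thesis using xs ys \<open>ys \<noteq> []\<close> by (simp add: geo_def last_append last_tl)
  qed
  have "xs \<noteq> []" using xs by (auto simp: geo_def)
  then have "hd (xs @ tl ys) = x" "last (xs @ tl ys) = z"
    using xs l by (auto simp: geo_def)
  then have "d x z \<le> length (xs @ tl ys) - 1" using dist_le w by blast
  then show ?thesis using xs ys by (simp add: geo_def)
qed

lemma d_sym_le: "x \<in> V \<Longrightarrow> y \<in> V \<Longrightarrow> d y x \<le> d x y"
proof -
  assume a: "x \<in> V" "y \<in> V"
  obtain xs where xs: "geo xs x y" using geo_ex a by blast
  then have "xs \<noteq> []" by (auto simp: geo_def)
  then have "d y x \<le> length (rev xs) - 1" using xs walk_rev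
    by (intro dist_le) (auto simp: geo_def hd_rev last_rev)
  then show ?thesis using xs by (simp add: geo_def)
qed

lemma d_sym: "x \<in> V \<Longrightarrow> y \<in> V \<Longrightarrow> d x y = d y x"
  using d_sym_le by (meson antisym)

lemma d_zero: "x \<in> V \<Longrightarrow> y \<in> V \<Longrightarrow> d x y = 0 \<Longrightarrow> x = y"
proof -
  assume a: "x \<in> V" "y \<in> V" "d x y = 0"
  obtain xs where xs: "geo xs x y" using geo_ex a by blast
  then obtain z where "xs = [z]" using a by (auto simp: geo_def length_Suc_conv)
  then show ?thesis using xs unfolding geo_def by force
qed

lemma d_E: "E x y \<Longrightarrow> d x y = 1"
proof -
  assume e: "E x y"
  then have "walk V E [x, y]" using EV by (auto simp: walk_Cons2 walk_single)
  then have "d x y \<le> 1" using dist_le[of "[x,y]" x y] by simp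
  moreover have "d x y \<noteq> 0" using d_zero EV e Eirr by metis
  ultimately show ?thesis by simp
qed

lemma d_one: "x \<in> V \<Longrightarrow> y \<in> V \<Longrightarrow> d x y = 1 \<Longrightarrow> E x y"
proof -
  assume a: "x \<in> V" "y \<in> V" "d x y = 1"
  obtain xs where xs: "geo xs x y" using geo_ex a by blast
  then obtain u v where "xs = [u, v]" using a by (auto simp: geo_def length_Suc_conv)
  then show ?thesis using xs by (auto simp: geo_def walk_Cons2)
qed

lemma geo_nth: "geo xs x y \<Longrightarrow> i < length xs \<Longrightarrow> d x (xs!i) = i \<and> d (xs!i) y = length xs - 1 - i"
proof -
  assume g: "geo xs x y" and i: "i < length xs"
  have w: "walk V E xs" and hx: "hd xs = x" and ly: "last xs = y" and len: "length xs = Suc (d x y)"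
    using g by (auto simp: geo_def)
  have V: "set xs \<subseteq> V" using w walk_V by blast
  have ne: "xs \<noteq> []" using i by auto
  have t: "take (Suc i) xs = take i xs @ [xs!i]" using i by (simp add: take_Suc_conv_app_nth)
  have "d x (xs!i) \<le> length (take (Suc i) xs) - 1"
  proof (rule dist_le)
    show "walk V E (take (Suc i) xs)" using walk_take[OF w, of "Suc i"] by simp
    show "hd (take (Suc i) xs) = x" using hx ne by (simp add: hd_take)
    show "last (take (Suc i) xs) = xs!i" using t by simp
  qed
  then have d1: "d x (xs!i) \<le> i" using i by simp
  have "d (xs!i) y \<le> length (drop i xs) - 1"
    using walk_drop[OF w i] i ly by (intro dist_le) (auto simp: hd_drop_conv_nth)
  then have d2: "d (xs!i) y \<le> length xs - 1 - i" by simp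
  have "x \<in> V" "y \<in> V" "xs!i \<in> V" using V hx ly ne i by auto
  then have "d x y \<le> d x (xs!i) + d (xs!i) y" using d_tri by blast
  then show ?thesis using d1 d2 len i by linarith
qed

lemma geo_distinct: "geo xs x y \<Longrightarrow> distinct xs"
  unfolding distinct_conv_nth using geo_nth by metis

lemma geo_set: "geo xs x y \<Longrightarrow> p \<in> set xs \<Longrightarrow> d x p + d p y = d x y"
proof -
  assume g: "geo xs x y" and p: "p \<in> set xs"
  then obtain i where i: "i < length xs" "p = xs!i" by (auto simp: in_set_conv_nth)
  then show ?thesis using geo_nth[OF g i(1)] g by (simp add: geo_def)
qed

lemma geo_hd_last: "geo xs x y \<Longrightarrow> hd xs = x \<and> last xs = y \<and> xs \<noteq> [] \<and> set xs \<subseteq> V"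
  by (auto simp: geo_def walk_def)

definition Bs :: "'a \<Rightarrow> 'a \<Rightarrow> 'a set" where "Bs c a = {z \<in> V. d a z < d c z}"

lemma cross:
  assumes ca: "E c a" and u: "u \<in> Bs c a" and u': "u' \<in> V" "u' \<notin> Bs c a" and uu: "E u u'"
  shows "u = a \<and> u' = c"
proof -
  have V: "a \<in> V" "c \<in> V" "u \<in> V" using ca EV u by (auto simp: Bs_def)
  obtain ps where ps: "geo ps a u" using geo_ex V by blast
  obtain qs where qs: "geo qs u' c" using geo_ex V u' by blast
  have psV: "set ps \<subseteq> V" and qsV: "set qs \<subseteq> V" using ps qs geo_hd_last by auto
  have psB: "d a p < d c p" if p: "p \<in> set ps" for p
  proof -
    have pV: "p \<in> V" using p psV by auto
    have "d a p + d p u = d a u" using geo_set[OF ps p] .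
    moreover have "d c u \<le> d c p + d p u" using d_tri V pV by blast
    moreover have "d a u < d c u" using u by (simp add: Bs_def)
    ultimately show ?thesis by linarith
  qed
  have qsB: "d c q \<le> d a q" if q: "q \<in> set qs" for q
  proof -
    have qV: "q \<in> V" using q qsV by auto
    have "d u' q + d q c = d u' c" using geo_set[OF qs q] .
    moreover have "d c u' \<le> d a u'" using u' by (simp add: Bs_def)
    moreover have "d a u' \<le> d a q + d q u'" using d_tri V qV u' by blast
    moreover have "d c u' = d u' c" "d q u' = d u' q" "d q c = d c q" using d_sym V qV u' by auto
    ultimately show ?thesis by linarith
  qed
  have disj: "set ps \<inter> set qs = {}"
  proof (rule ccontr)
    assume "set ps \<inter> set qs \<noteq> {}"
    then obtain p where p1: "p \<in> set ps" and p2: "p \<in> set qs" by blast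
    from psB[OF p1] qsB[OF p2] show False by linarith
  qed
  define ys where "ys = ps @ qs"
  have w: "walk V E ys" unfolding ys_def
  proof (rule walk_append)
    show "walk V E ps" "walk V E qs" using ps qs by (auto simp: geo_def)
    show "E (last ps) (hd qs)" using uu geo_hd_last[OF ps] geo_hd_last[OF qs] by simp
  qed
  have dis: "distinct ys" unfolding ys_def using geo_distinct[OF ps] geo_distinct[OF qs] disj by simp
  have hl: "hd ys = a" "last ys = c" unfolding ys_def using geo_hd_last[OF ps] geo_hd_last[OF qs] by auto
  have "\<not> length ys \<ge> 3"
  proof
    assume "length ys \<ge> 3"
    moreover have "E (last ys) (hd ys)" using hl Esym ca by simp
    ultimately show False using acyc[OF w dis] by simp
  qed
  moreover have "ps \<noteq> []" "qs \<noteq> []" using geo_hd_last[OF ps] geo_hd_last[OF qs] by auto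
  moreover have "length ys = length ps + length qs" by (simp add: ys_def)
  ultimately have "length ps = 1" "length qs = 1"
    by (simp_all add: length_greater_0_conv[symmetric] del: length_greater_0_conv)
  then obtain p q where "ps = [p]" "qs = [q]" by (auto simp: length_Suc_conv)
  then show ?thesis using geo_hd_last[OF ps] geo_hd_last[OF qs] by force
qed

lemma ex_cross: "xs \<noteq> [] \<Longrightarrow> \<not> P (hd xs) \<Longrightarrow> P (last xs) \<Longrightarrow>
   \<exists>i. Suc i < length xs \<and> \<not> P (xs!i) \<and> P (xs ! Suc i)"
proof (induction xs)
  case Nil then show ?case by simp
next
  case (Cons y ys)
  show ?case
  proof (cases ys)
    case Nil then show ?thesis using Cons by simp
  next
    case (Cons z zs)
    show ?thesis
    proof (cases "P z")
      case True
      then show ?thesis using Cons \<open>\<not> P (hd (y # ys))\<close> by (intro exI[of _ 0]) auto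
    next
      case False
      then obtain i where "Suc i < length ys" "\<not> P (ys!i)" "P (ys ! Suc i)"
        using Cons.IH Cons.prems Cons by auto
      then show ?thesis by (intro exI[of _ "Suc i"]) auto
    qed
  qed
qed

lemma sep:
  assumes ca: "E c a" and z: "z \<in> Bs c a" and w: "w \<in> V" "w \<notin> Bs c a"
  shows "d w z = d w c + d c z"
proof -
  have zV: "z \<in> V" using z by (simp add: Bs_def)
  obtain xs where xs: "geo xs w z" using geo_ex zV w by blast
  have hl: "hd xs = w" "last xs = z" "xs \<noteq> []" "set xs \<subseteq> V" using geo_hd_last[OF xs] by auto
  obtain i where i: "Suc i < length xs" "xs!i \<notin> Bs c a" "xs ! Suc i \<in> Bs c a"
    using ex_cross[of xs "\<lambda>v. v \<in> Bs c a"] hl w z by auto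
  have e: "E (xs!i) (xs ! Suc i)" using xs i(1) by (simp add: geo_def walk_def)
  have "xs!i \<in> V" using hl i(1) by auto
  then have c: "xs!i = c" using cross[OF ca i(3) _ i(2) Esym[OF e]] by simp
  show ?thesis using geo_nth[OF xs, of i] i(1) c xs by (simp add: geo_def)
qed

lemma in_own: "E c a \<Longrightarrow> a \<in> Bs c a"
  using d_E d_refl EV by (auto simp: Bs_def)

lemma c_notin: "E c a \<Longrightarrow> c \<notin> Bs c a"
  using d_E d_refl EV by (auto simp: Bs_def)

lemma Bs_V: "Bs c a \<subseteq> V" by (auto simp: Bs_def)

lemma branch_ex: "c \<in> V \<Longrightarrow> z \<in> V \<Longrightarrow> z \<noteq> c \<Longrightarrow> \<exists>b. E c b \<and> z \<in> Bs c b"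
proof -
  assume a: "c \<in> V" "z \<in> V" "z \<noteq> c"
  obtain xs where xs: "geo xs c z" using geo_ex a by blast
  have "d c z \<noteq> 0" using d_zero a by metis
  then have len: "1 < length xs" using xs by (simp add: geo_def)
  have e: "E (xs!0) (xs!1)" using xs len by (simp add: geo_def walk_def)
  have "xs!0 = c" using xs geo_hd_last by (metis hd_conv_nth)
  moreover have "d (xs!1) z < d c z" using geo_nth[OF xs, of 1] len xs by (simp add: geo_def)
  moreover have "xs!1 \<in> V" using e EV by blast
  ultimately show ?thesis using e a by (auto simp: Bs_def)
qed

lemma tri_free: "E c a \<Longrightarrow> E c b \<Longrightarrow> a \<noteq> b \<Longrightarrow> \<not> E a b"
proof
  assume a: "E c a" "E c b" "a \<noteq> b" "E a b"
  have "walk V E [a, c, b]" using a EV Esym by (auto simp: walk_Cons2 walk_single)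
  moreover have "distinct [a, c, b]" using a Eirr by auto
  ultimately show False using acyc[of "[a,c,b]"] a Esym by auto
qed

lemma d2: "E c a \<Longrightarrow> E c b \<Longrightarrow> a \<noteq> b \<Longrightarrow> d a b = 2"
proof -
  assume a: "E c a" "E c b" "a \<noteq> b"
  have V: "a \<in> V" "b \<in> V" "c \<in> V" using a EV by auto
  have "d a b \<le> d a c + d c b" using d_tri V by blast
  moreover have "d a c = 1" "d c b = 1" using a d_E Esym by auto
  moreover have "d a b \<noteq> 0" using d_zero V a by metis
  moreover have "d a b \<noteq> 1" using d_one V a tri_free by metis
  ultimately show ?thesis by linarith
qed

lemma br_disj: "E c a \<Longrightarrow> E c b \<Longrightarrow> a \<noteq> b \<Longrightarrow> Bs c a \<inter> Bs c b = {}"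
proof (rule ccontr)
  assume a: "E c a" "E c b" "a \<noteq> b" "Bs c a \<inter> Bs c b \<noteq> {}"
  then obtain z where z: "z \<in> Bs c a" "z \<in> Bs c b" by auto
  have V: "a \<in> V" "b \<in> V" "c \<in> V" using a EV by auto
  have "b \<notin> Bs c a" using d2[OF a(1,2,3)] d_E[OF a(2)] by (simp add: Bs_def)
  then have "d b z = d b c + d c z" using sep[OF a(1) z(1)] V by blast
  then show False using z(2) by (simp add: Bs_def)
qed

lemma out_d: "E c a \<Longrightarrow> z \<in> V \<Longrightarrow> z \<notin> Bs c a \<Longrightarrow> d a z = d c z + 1"
proof -
  assume a: "E c a" "z \<in> V" "z \<notin> Bs c a"
  have V: "a \<in> V" "c \<in> V" using a EV by auto
  have "d z a = d z c + d c a" using sep[OF a(1) in_own[OF a(1)] a(2,3)] .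
  then show ?thesis using d_E[OF a(1)] d_sym V a(2) by simp
qed

lemma bip: "E c a \<Longrightarrow> z \<in> V \<Longrightarrow> d a z = d c z + 1 \<or> d c z = d a z + 1"
proof -
  assume a: "E c a" "z \<in> V"
  show ?thesis
  proof (cases "z \<in> Bs c a")
    case True
    have V: "a \<in> V" "c \<in> V" using a EV by auto
    have "d c z \<le> d c a + d a z" using d_tri V a by blast
    then show ?thesis using True d_E[OF a(1)] by (simp add: Bs_def)
  next
    case False then show ?thesis using out_d a by simp
  qed
qed

lemma two_elems: "2 \<le> card S \<Longrightarrow> \<exists>x y. x \<in> S \<and> y \<in> S \<and> x \<noteq> y"
proof -
  assume c: "2 \<le> card S"
  then have f: "finite S" using card.infinite by fastforce
  have "\<not> card S \<le> Suc 0" using c by simp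
  then show ?thesis using card_le_Suc0_iff_eq[OF f] by blast
qed

lemma card_two: "finite S \<Longrightarrow> x \<in> S \<Longrightarrow> y \<in> S \<Longrightarrow> x \<noteq> y \<Longrightarrow> 2 \<le> card S"
proof -
  assume a: "finite S" "x \<in> S" "y \<in> S" "x \<noteq> y"
  have "card {x, y} \<le> card S" using a by (intro card_mono) auto
  then show ?thesis using a by simp
qed

definition G :: "'a \<Rightarrow> 'a set" where
  "G v = {a. E v a \<and> (\<forall>z\<in>Bs v a. \<not> major V E z)}"
definition W :: "'a set" where "W = {v. major V E v \<and> 2 \<le> card (G v)}"
definition A :: "'a set" where "A = (\<Union>v\<in>W. G v)"
definition U :: "'a set" where "U = (\<Union>v\<in>W. \<Union>a\<in>G v. Bs v a)"

lemma G_V: "G v \<subseteq> V" using EV by (auto simp: G_def)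
lemma fin_G: "finite (G v)" using G_V finV finite_subset by blast
lemma W_V: "W \<subseteq> V" by (auto simp: W_def major_def)
lemma fin_W: "finite W" using W_V finV finite_subset by blast
lemma A_V: "A \<subseteq> V" using G_V by (auto simp: A_def)
lemma fin_A: "finite A" using A_V finV finite_subset by blast
lemma U_V: "U \<subseteq> V" using Bs_V by (auto simp: U_def)
lemma major_V: "major V E v \<Longrightarrow> v \<in> V" by (simp add: major_def)

lemma nest:
  assumes ca: "E c a" and wb: "E w b" and w: "w \<in> Bs c a" and c: "c \<notin> Bs w b" and u: "u \<in> Bs w b"
  shows "u \<in> Bs c a"
proof (rule ccontr)
  assume nu: "u \<notin> Bs c a"
  have V: "c \<in> V" "w \<in> V" "u \<in> V" using ca wb EV u by (auto simp: Bs_def)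
  have 1: "d u w = d u c + d c w" using sep[OF ca w V(3) nu] .
  have 2: "d c u = d c w + d w u" using sep[OF wb u V(1) c] .
  have "d u w = d w u" "d u c = d c u" using d_sym V by auto
  then have "d c w = 0" using 1 2 by linarith
  then have "c = w" using d_zero V by blast
  then show False using w c_notin[OF ca] by simp
qed

lemma bigbranch:
  assumes ca: "E c a" and w0: "w0 \<in> Bs c a" "major V E w0"
  shows "\<exists>b b'. b \<noteq> b' \<and> b \<in> A \<and> b' \<in> A \<and> b \<in> Bs c a \<and> b' \<in> Bs c a"
proof -
  define M where "M = {w \<in> Bs c a. major V E w}"
  have finM: "finite M" using finV Bs_V finite_subset unfolding M_def by (metis (no_types, lifting) mem_Collect_eq subsetI)
  have neM: "M \<noteq> {}" using w0 by (auto simp: M_def)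
  define m where "m = Max (d c ` M)"
  have "m \<in> d c ` M" unfolding m_def using finM neM by (intro Max_in) auto
  then obtain w where wM: "w \<in> M" and wm: "d c w = m" by auto
  have wmax: "d c u \<le> d c w" if "u \<in> M" for u
  proof -
    have "d c u \<le> Max (d c ` M)" using that finM by (intro Max_ge) auto
    then show ?thesis using wm m_def by simp
  qed
  have wB: "w \<in> Bs c a" and wmaj: "major V E w" using wM by (auto simp: M_def)
  have cV: "c \<in> V" and wV: "w \<in> V" using ca EV wB by (auto simp: Bs_def)
  define Nall where "Nall = {b \<in> V. E w b}"
  define N' where "N' = {b \<in> V. E w b \<and> c \<notin> Bs w b}"
  have finN: "finite Nall" using finV by (simp add: Nall_def)
  have c3: "3 \<le> card Nall" using wmaj by (simp add: major_def degree_def Nall_def)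
  have "card (Nall - N') \<le> Suc 0"
  proof (subst card_le_Suc0_iff_eq)
    show "finite (Nall - N')" using finN by simp
    show "\<forall>a1\<in>Nall - N'. \<forall>a2\<in>Nall - N'. a1 = a2"
    proof (intro ballI, rule ccontr)
      fix b1 b2 assume b: "b1 \<in> Nall - N'" "b2 \<in> Nall - N'" "b1 \<noteq> b2"
      then have "E w b1" "E w b2" "c \<in> Bs w b1" "c \<in> Bs w b2" by (auto simp: Nall_def N'_def)
      then show False using br_disj b(3) by blast
    qed
  qed
  moreover have "card Nall \<le> card N' + card (Nall - N')"
  proof -
    have "Nall \<subseteq> N' \<union> (Nall - N')" by auto
    moreover have "finite N'" using finV by (simp add: N'_def)
    ultimately have "card Nall \<le> card (N' \<union> (Nall - N'))" using finN by (intro card_mono) auto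
    also have "\<dots> \<le> card N' + card (Nall - N')" by (rule card_Un_le)
    finally show ?thesis .
  qed
  ultimately have cN': "2 \<le> card N'" using c3 by linarith
  have N'G: "N' \<subseteq> G w"
  proof
    fix b assume b: "b \<in> N'"
    then have wb: "E w b" and cb: "c \<notin> Bs w b" by (auto simp: N'_def)
    have "\<not> major V E z" if z: "z \<in> Bs w b" for z
    proof
      assume zm: "major V E z"
      have zB: "z \<in> Bs c a" using nest[OF ca wb wB cb z] .
      then have "z \<in> M" using zm by (simp add: M_def)
      then have le: "d c z \<le> d c w" using wmax by blast
      have eq: "d c z = d c w + d w z" using sep[OF wb z cV cb] .
      have "z \<noteq> w" using z c_notin[OF wb] by auto
      then have "d w z \<noteq> 0" using d_zero wV z Bs_V by blast
      then show False using le eq by linarith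
    qed
    then show "b \<in> G w" using wb by (simp add: G_def)
  qed
  have "card N' \<le> card (G w)" using N'G fin_G by (rule card_mono[rotated])
  then have "w \<in> W" using cN' wmaj by (simp add: W_def)
  then have N'A: "N' \<subseteq> A" using N'G by (auto simp: A_def)
  obtain b b' where bb: "b \<in> N'" "b' \<in> N'" "b \<noteq> b'" using two_elems[OF cN'] by blast
  have inB: "x \<in> Bs c a" if "x \<in> N'" for x
  proof -
    have "E w x" "c \<notin> Bs w x" using that by (auto simp: N'_def)
    then show ?thesis using nest[OF ca _ wB] in_own by blast
  qed
  show ?thesis using bb N'A inB by blast
qed

lemma geo_E: "geo p x y \<Longrightarrow> Suc i < length p \<Longrightarrow> E (p!i) (p ! Suc i)"
  by (simp add: geo_def walk_def)

lemma geo_inV: "geo p x y \<Longrightarrow> i < length p \<Longrightarrow> p!i \<in> V"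
  using geo_hd_last by (metis nth_mem subsetD)

lemma resL:
  assumes p: "geo p x y" and i: "2 * i < d x y" and z: "z \<in> Bs (p ! Suc i) (p!i)"
  shows "d x z < d y z"
proof -
  have len: "length p = Suc (d x y)" using p by (simp add: geo_def)
  have si: "Suc i < length p" using i len by simp
  have e: "E (p ! Suc i) (p!i)" using geo_E[OF p si] Esym by blast
  have g1: "d x (p!i) = i" "d (p!i) y = d x y - i" using geo_nth[OF p, of i] si len by auto
  have g2: "d (p!Suc i) y = d x y - Suc i" using geo_nth[OF p, of "Suc i"] si len by auto
  have V: "x \<in> V" "y \<in> V" "p!i \<in> V" "p!Suc i \<in> V" "z \<in> V"
    using geo_hd_last[OF p] geo_inV[OF p] si z Bs_V by auto
  have yn: "y \<notin> Bs (p ! Suc i) (p!i)"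
    using g1 g2 d_sym V i by (auto simp: Bs_def)
  have "d y z = d y (p!Suc i) + d (p!Suc i) z" using sep[OF e z V(2) yn] .
  moreover have "d x z \<le> d x (p!i) + d (p!i) z" using d_tri V by blast
  moreover have "d (p!i) z < d (p!Suc i) z" using z by (simp add: Bs_def)
  moreover have "d y (p!Suc i) = d x y - Suc i" using g2 d_sym V by simp
  ultimately show ?thesis using g1 i by linarith
qed

lemma resR:
  assumes p: "geo p x y" and j: "d x y < 2 * j" "1 \<le> j" "j \<le> d x y" and z: "z \<in> Bs (p ! (j - 1)) (p!j)"
  shows "d y z < d x z"
proof -
  have len: "length p = Suc (d x y)" using p by (simp add: geo_def)
  have sj: "Suc (j - 1) < length p" using j len by simp
  have e: "E (p ! (j - 1)) (p!j)" using geo_E[OF p sj] j by simp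
  have g1: "d x (p!j) = j" "d (p!j) y = d x y - j" using geo_nth[OF p, of j] j len by auto
  have g2: "d x (p!(j-1)) = j - 1" using geo_nth[OF p, of "j - 1"] j len by auto
  have V: "x \<in> V" "y \<in> V" "p!j \<in> V" "p!(j-1) \<in> V" "z \<in> V"
    using geo_hd_last[OF p] geo_inV[OF p] j len z Bs_V by auto
  have xn: "x \<notin> Bs (p ! (j - 1)) (p!j)"
    using g1 g2 d_sym V j by (auto simp: Bs_def)
  have "d x z = d x (p!(j-1)) + d (p!(j-1)) z" using sep[OF e z V(1) xn] .
  moreover have "d y z \<le> d y (p!j) + d (p!j) z" using d_tri V by blast
  moreover have "d (p!j) z < d (p!(j-1)) z" using z by (simp add: Bs_def)
  moreover have "d y (p!j) = d x y - j" using g1 d_sym V by simp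
  ultimately show ?thesis using g2 j by linarith
qed

lemma resolve:
  assumes xy: "x \<in> V" "y \<in> V" "x \<noteq> y" and maj: "major V E w0"
  shows "2 \<le> card (A \<inter> resolving_set V E x y)"
proof -
  define m where "m = d x y"
  have m1: "1 \<le> m" using d_zero xy unfolding m_def by (metis less_one not_less)
  obtain p where p: "geo p x y" using geo_ex xy by blast
  have len: "length p = Suc m" using p by (simp add: geo_def m_def)
  define i where "i = (m - 1) div 2"
  define j where "j = m - i"
  have ij: "2 * i < m" "m < 2 * j" "1 \<le> j" "j \<le> m" "Suc i \<le> m" using m1 unfolding i_def j_def by auto
  have ji: "j = Suc (Suc i) \<or> j = Suc i" using m1 unfolding i_def j_def by presburger
  define B1 where "B1 = Bs (p ! Suc i) (p!i)"
  define B2 where "B2 = Bs (p ! (j - 1)) (p!j)"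
  have B1R: "B1 \<subseteq> resolving_set V E x y"
    using resL[OF p] ij Bs_V unfolding B1_def resolving_set_def m_def by fastforce
  have B2R: "B2 \<subseteq> resolving_set V E x y"
    using resR[OF p] ij Bs_V unfolding B2_def resolving_set_def m_def by fastforce
  have finR: "finite (A \<inter> resolving_set V E x y)" using fin_A by simp
  have suff: "2 \<le> card (A \<inter> resolving_set V E x y)" if "b \<in> A" "b' \<in> A" "b \<noteq> b'"
    "b \<in> B1 \<union> B2" "b' \<in> B1 \<union> B2" for b b'
    using card_two[OF finR, of b b'] that B1R B2R by blast
  have e1: "E (p ! Suc i) (p!i)" using geo_E[OF p, of i] ij len Esym by simp
  have e2: "E (p ! (j - 1)) (p!j)" using geo_E[OF p, of "j - 1"] ij len by simp
  show ?thesis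
  proof (cases "\<exists>z\<in>B1. major V E z")
    case True
    then obtain z where "z \<in> B1" "major V E z" by blast
    then show ?thesis using bigbranch[OF e1] suff unfolding B1_def by blast
  next
    case F1: False
    show ?thesis
    proof (cases "\<exists>z\<in>B2. major V E z")
      case True
      then obtain z where "z \<in> B2" "major V E z" by blast
      then show ?thesis using bigbranch[OF e2] suff unfolding B2_def by blast
    next
      case F2: False
      have w0V: "w0 \<in> V" using maj major_V by blast
      have w0n: "w0 \<notin> B1" "w0 \<notin> B2" using F1 F2 maj by auto
      show ?thesis
      proof (cases "j = Suc (Suc i)")
        case True
        define c where "c = p ! Suc i"
        have c2: "p ! (j - 1) = c" using True c_def by simp
        have ea1: "E c (p!i)" using e1 c_def by simp
        have ea2: "E c (p!j)" using e2 c2 by simp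
        have dis: "distinct p" using geo_distinct[OF p] .
        have ne: "p!i \<noteq> p!j" using dis ij len True by (simp add: nth_eq_iff_index_eq)
        have cV: "c \<in> V" using ea1 EV by blast
        show ?thesis
        proof (cases "major V E c")
          case True
          have "p!i \<in> G c" using ea1 F1 unfolding G_def B1_def c_def by auto
          moreover have "p!j \<in> G c" using ea2 F2 c2 unfolding G_def B2_def by auto
          ultimately have "2 \<le> card (G c)" using card_two[OF fin_G] ne by blast
          then have "c \<in> W" using True by (simp add: W_def)
          then have "p!i \<in> A" "p!j \<in> A" using \<open>p!i \<in> G c\<close> \<open>p!j \<in> G c\<close> by (auto simp: A_def)
          moreover have "p!i \<in> B1" "p!j \<in> B2" using in_own ea1 ea2 c2 unfolding B1_def B2_def c_def by auto
          ultimately show ?thesis using suff ne by blast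
        next
          case False
          have "w0 \<noteq> c" using False maj by blast
          then obtain b where b: "E c b" "w0 \<in> Bs c b" using branch_ex cV w0V by metis
          have "b \<noteq> p!i" using b w0n unfolding B1_def c_def by auto
          moreover have "b \<noteq> p!j" using b w0n c2 unfolding B2_def by auto
          ultimately have "card {p!i, p!j, b} = 3" using ne by simp
          moreover have "{p!i, p!j, b} \<subseteq> {z \<in> V. E c z}" using ea1 ea2 b EV by auto
          ultimately have "3 \<le> degree V E c" unfolding degree_def using finV
            by (metis (no_types, lifting) card_mono finite_subset mem_Collect_eq subsetI)
          then show ?thesis using False cV by (simp add: major_def)
        qed
      next
        case False
        then have jS: "j = Suc i" using ji by simp
        define u where "u = p!i"
        define v where "v = p ! Suc i"
        have euv: "E u v" using e1 Esym u_def v_def by blast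
        have B2': "B2 = Bs u v" using jS unfolding B2_def u_def v_def by simp
        have B1': "B1 = Bs v u" unfolding B1_def u_def v_def by simp
        have uV: "u \<in> V" "v \<in> V" using euv EV by auto
        have "u \<in> B1" using B1' in_own[OF Esym[OF euv]] by simp
        then have "w0 \<noteq> u" using w0n by blast
        then obtain b where b: "E u b" "w0 \<in> Bs u b" using branch_ex uV w0V by metis
        have bv: "b \<noteq> v" using b w0n B2' by auto
        have "d b v = 2" using d2[OF b(1) euv bv] .
        then have vn: "v \<notin> Bs u b" using d_E[OF euv] by (simp add: Bs_def)
        have "d v w0 = d v u + d u w0" using sep[OF b(1) b(2) uV(2) vn] .
        then have "d u w0 < d v w0" using d_E[OF Esym[OF euv]] by simp
        then have "w0 \<in> B1" using B1' w0V by (simp add: Bs_def)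
        then show ?thesis using w0n by blast
      qed
    qed
  qed
qed

lemma Gdisj: "major V E v \<Longrightarrow> major V E v' \<Longrightarrow> v \<noteq> v' \<Longrightarrow> G v \<inter> G v' = {}"
proof (rule ccontr)
  assume a: "major V E v" "major V E v'" "v \<noteq> v'" "G v \<inter> G v' \<noteq> {}"
  then obtain b where b: "b \<in> G v" "b \<in> G v'" by blast
  then have e: "E b v" "E b v'" using Esym by (auto simp: G_def)
  have "d v v' = 2" using d2[OF e a(3)] .
  moreover have "d b v' = 1" using d_E e by simp
  ultimately have "v' \<in> Bs v b" using EV e by (simp add: Bs_def)
  then show False using b(1) a(2) by (simp add: G_def)
qed

lemma disj2:
  assumes v: "major V E v" "major V E v'" "v \<noteq> v'" and a: "a \<in> G v" "a' \<in> G v'"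
  shows "Bs v a \<inter> Bs v' a' = {}"
proof (rule ccontr)
  assume "Bs v a \<inter> Bs v' a' \<noteq> {}"
  then obtain z where z: "z \<in> Bs v a" "z \<in> Bs v' a'" by blast
  have e: "E v a" "E v' a'" using a by (auto simp: G_def)
  have n1: "v' \<notin> Bs v a" using a v by (auto simp: G_def)
  have n2: "v \<notin> Bs v' a'" using a v by (auto simp: G_def)
  have V: "v \<in> V" "v' \<in> V" using v major_V by auto
  have 1: "d v' z = d v' v + d v z" using sep[OF e(1) z(1) V(2) n1] .
  have 2: "d v z = d v v' + d v' z" using sep[OF e(2) z(2) V(1) n2] .
  have "d v v' = 0" using 1 2 d_sym V by simp
  then show False using d_zero V v(3) by blast
qed

lemma avg:
  fixes s :: "'b \<Rightarrow> real"
  assumes fin: "finite I" and c: "2 \<le> card I" and pair: "\<And>i j. i \<in> I \<Longrightarrow> j \<in> I \<Longrightarrow> i \<noteq> j \<Longrightarrow> 1 \<le> s i + s j"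
  shows "real (card I) / 2 \<le> sum s I"
proof (cases "\<forall>i\<in>I. 1/2 \<le> s i")
  case True
  then have "real (card I) * (1/2) \<le> sum s I" by (intro sum_bounded_below) auto
  then show ?thesis by simp
next
  case False
  then obtain i0 where i0: "i0 \<in> I" "s i0 < 1/2" by auto
  have "real (card (I - {i0})) * (1 - s i0) \<le> sum s (I - {i0})"
    using pair i0 by (intro sum_bounded_below) (smt (verit) DiffE insertI1)
  moreover have "card (I - {i0}) = card I - 1" using i0 fin by simp
  moreover have "sum s I = s i0 + sum s (I - {i0})" using i0 fin by (simp add: sum.remove)
  ultimately have le: "s i0 + (real (card I) - 1) * (1 - s i0) \<le> sum s I"
    using c by (simp add: of_nat_diff)
  have "0 \<le> (real (card I) - 2) * (1/2 - s i0)" using c i0 by (intro mult_nonneg_nonneg) auto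
  then show ?thesis using le by (simp add: algebra_simps)
qed

lemma lower:
  assumes g: "resolving_function V E g"
  shows "real (card A) / 2 \<le> sum g U"
proof -
  have gnn: "\<And>z. z \<in> V \<Longrightarrow> 0 \<le> g z" using g by (simp add: resolving_function_def)
  have finB: "finite (Bs v a)" for v a using Bs_V finV finite_subset by blast
  have per: "real (card (G v)) / 2 \<le> (\<Sum>a\<in>G v. sum g (Bs v a))" if v: "v \<in> W" for v
  proof (rule avg[OF fin_G])
    show "2 \<le> card (G v)" using v by (simp add: W_def)
    fix a a' assume a: "a \<in> G v" "a' \<in> G v" "a \<noteq> a'"
    have e: "E v a" "E v a'" using a by (auto simp: G_def)
    have aV: "a \<in> V" "a' \<in> V" using e EV by auto
    have R: "resolving_set V E a a' \<subseteq> Bs v a \<union> Bs v a'"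
    proof
      fix z assume z: "z \<in> resolving_set V E a a'"
      then have zV: "z \<in> V" by (simp add: resolving_set_def)
      show "z \<in> Bs v a \<union> Bs v a'"
      proof (rule ccontr)
        assume "z \<notin> Bs v a \<union> Bs v a'"
        then have "d a z = d v z + 1" "d a' z = d v z + 1" using out_d e zV by auto
        then show False using z by (simp add: resolving_set_def)
      qed
    qed
    have "1 \<le> sum g (resolving_set V E a a')" using g aV a(3) by (simp add: resolving_function_def)
    also have "\<dots> \<le> sum g (Bs v a \<union> Bs v a')"
    proof (rule sum_mono2)
      show "finite (Bs v a \<union> Bs v a')" using finB by simp
      show "resolving_set V E a a' \<subseteq> Bs v a \<union> Bs v a'" using R .
      fix b assume "b \<in> Bs v a \<union> Bs v a' - resolving_set V E a a'"
      then have "b \<in> V" using Bs_V by blast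
      then show "0 \<le> g b" using gnn by blast
    qed
    also have "\<dots> = sum g (Bs v a) + sum g (Bs v a')"
      using br_disj[OF e a(3)] finB by (intro sum.union_disjoint) auto
    finally show "1 \<le> sum g (Bs v a) + sum g (Bs v a')" .
  qed
  have "sum g U = (\<Sum>v\<in>W. sum g (\<Union>a\<in>G v. Bs v a))" unfolding U_def
  proof (rule sum.UNION_disjoint[OF fin_W])
    show "\<forall>v\<in>W. finite (\<Union>a\<in>G v. Bs v a)" using fin_G finB by blast
    show "\<forall>v\<in>W. \<forall>v'\<in>W. v \<noteq> v' \<longrightarrow> (\<Union>a\<in>G v. Bs v a) \<inter> (\<Union>a\<in>G v'. Bs v' a) = {}"
      using disj2 by (auto simp: W_def) blast
  qed
  also have "\<dots> = (\<Sum>v\<in>W. \<Sum>a\<in>G v. sum g (Bs v a))"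
  proof (rule sum.cong[OF refl])
    fix v assume "v \<in> W"
    show "sum g (\<Union>a\<in>G v. Bs v a) = (\<Sum>a\<in>G v. sum g (Bs v a))"
      using fin_G finB br_disj by (intro sum.UNION_disjoint) (auto simp: G_def)
  qed
  finally have sU: "sum g U = (\<Sum>v\<in>W. \<Sum>a\<in>G v. sum g (Bs v a))" .
  have "card A = (\<Sum>v\<in>W. card (G v))" unfolding A_def
    using fin_W fin_G Gdisj by (intro card_UN_disjoint) (auto simp: W_def)
  then have "real (card A) / 2 = (\<Sum>v\<in>W. real (card (G v)) / 2)"
    by (simp add: sum_divide_distrib)
  also have "\<dots> \<le> (\<Sum>v\<in>W. \<Sum>a\<in>G v. sum g (Bs v a))" using per by (intro sum_mono) auto
  finally show ?thesis using sU by simp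
qed

definition fA :: "'a \<Rightarrow> real" where "fA z = (if z \<in> A then 1/2 else 0)"

lemma sum_fA: "finite S \<Longrightarrow> sum fA S = real (card (S \<inter> A)) / 2"
proof -
  assume f: "finite S"
  have "sum (\<lambda>_. (1/2::real)) {z \<in> S. z \<in> A} = sum (\<lambda>z. if z \<in> A then 1/2 else 0) S"
    by (rule sum.inter_filter[OF f])
  moreover have "{z \<in> S. z \<in> A} = S \<inter> A" by auto
  ultimately have "sum fA S = real (card (S \<inter> A)) * (1/2)" unfolding fA_def by simp
  then show ?thesis by simp
qed

lemma fA_res: assumes maj: "major V E w0" shows "resolving_function V E fA"
  unfolding resolving_function_def
proof (intro conjI ballI impI)
  fix x y assume xy: "x \<in> V" "y \<in> V" "x \<noteq> y"
  have "2 \<le> card (A \<inter> resolving_set V E x y)" using resolve[OF xy maj] .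
  moreover have "finite (resolving_set V E x y)" using finV by (simp add: resolving_set_def)
  moreover have "resolving_set V E x y \<inter> A = A \<inter> resolving_set V E x y" by auto
  ultimately show "1 \<le> sum fA (resolving_set V E x y)" using sum_fA[of "resolving_set V E x y"] by simp
qed (auto simp: fA_def)

lemma sum_fA_V: "sum fA V = real (card A) / 2"
  using sum_fA[OF finV] A_V by (simp add: Int_absorb1 Int_commute)

lemma leaf_beyond:
  assumes vm: "major V E v" and a: "a \<in> G v" and x: "x \<in> Bs v a"
  shows "\<exists>l xs. terminal_of V E v l \<and> l \<in> Bs v a \<and> geo xs x l \<and> set xs \<subseteq> Bs v a"
proof -
  have e: "E v a" and mf: "\<And>z. z \<in> Bs v a \<Longrightarrow> \<not> major V E z" using a by (auto simp: G_def)
  have vV: "v \<in> V" using vm major_V by blast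
  have xV: "x \<in> V" using x Bs_V by blast
  have xv: "x \<noteq> v" using x c_notin[OF e] by blast
  then have dvx: "d v x \<noteq> 0" using d_zero vV xV by metis
  define Z where "Z = {z \<in> V. d v z = d v x + d x z}"
  have finZ: "finite Z" using finV by (simp add: Z_def)
  have xZ: "x \<in> Z" using xV d_refl by (simp add: Z_def)
  define m where "m = Max (d v ` Z)"
  have "m \<in> d v ` Z" unfolding m_def using finZ xZ by (intro Max_in) auto
  then obtain l where lZ: "l \<in> Z" and lm: "d v l = m" by auto
  have lmax: "d v u \<le> d v l" if "u \<in> Z" for u
  proof -
    have "d v u \<le> Max (d v ` Z)" using that finZ by (intro Max_ge) auto
    then show ?thesis using lm m_def by simp
  qed
  have lV: "l \<in> V" and dl: "d v l = d v x + d x l" using lZ by (auto simp: Z_def)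
  have lB: "l \<in> Bs v a"
  proof (rule ccontr)
    assume ln: "l \<notin> Bs v a"
    have "d l x = d l v + d v x" using sep[OF e x lV ln] .
    then show False using dl d_sym lV vV xV dvx by simp
  qed
  have lv: "l \<noteq> v" using lB c_notin[OF e] by blast
  obtain p where p: "E l p" "v \<in> Bs l p" using branch_ex[OF lV vV] lv by metis
  have N: "{b \<in> V. E l b} = {p}"
  proof
    show "{p} \<subseteq> {b \<in> V. E l b}" using p EV by auto
    show "{b \<in> V. E l b} \<subseteq> {p}"
    proof
      fix q assume q: "q \<in> {b \<in> V. E l b}"
      then have eq: "E l q" and qV: "q \<in> V" by auto
      have "d q v = d l v + 1 \<or> d l v = d q v + 1" using bip[OF eq vV] .
      then show "q \<in> {p}"
      proof
        assume h: "d q v = d l v + 1"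
        have t1: "d v q \<le> d v x + d x q" using d_tri vV xV qV by blast
        have t2: "d x q \<le> d x l + d l q" using d_tri xV lV qV by blast
        have "d l q = 1" using d_E[OF eq] .
        moreover have "d v q = d q v" "d v l = d l v" using d_sym vV qV lV by auto
        ultimately have "q \<in> Z" using h t1 t2 dl qV unfolding Z_def by simp
        then have "d v q \<le> d v l" using lmax by blast
        then show ?thesis using h d_sym vV qV lV by simp
      next
        assume h: "d l v = d q v + 1"
        then have "v \<in> Bs l q" using vV by (simp add: Bs_def)
        then have "q = p" using br_disj[OF p(1) eq] p(2) by blast
        then show ?thesis by simp
      qed
    qed
  qed
  have leaf: "leaf V E l" using N lV by (simp add: leaf_def degree_def)
  have trm: "terminal_of V E v l"
    unfolding terminal_of_def
  proof (intro conjI allI impI)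
    show "major V E v" "leaf V E l" using vm leaf by auto
    fix w assume w: "major V E w \<and> w \<noteq> v"
    have wV: "w \<in> V" using w major_V by blast
    have wn: "w \<notin> Bs v a" using w mf by blast
    have "d w l = d w v + d v l" using sep[OF e lB wV wn] .
    moreover have "d w v \<noteq> 0" using d_zero wV vV w by metis
    moreover have "d l w = d w l" "d l v = d v l" using d_sym wV lV vV by auto
    ultimately show "d l v < d l w" by simp
  qed
  obtain xs where xs: "geo xs x l" using geo_ex xV lV by blast
  have "set xs \<subseteq> Bs v a"
  proof
    fix q assume q: "q \<in> set xs"
    have qV: "q \<in> V" using q geo_hd_last[OF xs] by blast
    have gs: "d x q + d q l = d x l" using geo_set[OF xs q] .
    show "q \<in> Bs v a"
    proof (rule ccontr)
      assume qn: "q \<notin> Bs v a"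
      have 1: "d q x = d q v + d v x" using sep[OF e x qV qn] .
      have 2: "d q l = d q v + d v l" using sep[OF e lB qV qn] .
      have "d q x = d x q" using d_sym qV xV by simp
      then show False using 1 2 gs dl dvx by linarith
    qed
  qed
  then show ?thesis using trm lB xs by blast
qed

lemma cross_in:
  assumes e: "E c a" and w: "walk V E ys" and h: "hd ys \<notin> Bs c a" and l: "last ys \<in> Bs c a"
  shows "c \<in> set (butlast ys)"
proof -
  have ne: "ys \<noteq> []" using w walk_Nil by auto
  obtain i where i: "Suc i < length ys" "ys!i \<notin> Bs c a" "ys ! Suc i \<in> Bs c a"
    using ex_cross[of ys "\<lambda>v. v \<in> Bs c a", OF ne h l] by blast
  have ee: "E (ys!i) (ys ! Suc i)" using w i(1) by (simp add: walk_def)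
  have "ys!i \<in> V" using w i(1) walk_V by (meson Suc_lessD nth_mem subsetD)
  then have "ys!i = c" using cross[OF e i(3) _ i(2) Esym[OF ee]] by simp
  moreover have "ys!i = butlast ys ! i" using i(1) by (simp add: nth_butlast)
  moreover have "i < length (butlast ys)" using i(1) by simp
  ultimately show ?thesis by (metis nth_mem)
qed

lemma cross_out:
  assumes e: "E c a" and w: "walk V E ys" and h: "hd ys \<in> Bs c a" and l: "last ys \<notin> Bs c a"
  shows "c \<in> set (tl ys)"
proof -
  have ne: "ys \<noteq> []" using w walk_Nil by auto
  have "c \<in> set (butlast (rev ys))"
    using cross_in[OF e walk_rev[OF w]] h l ne by (simp add: hd_rev last_rev)
  then show ?thesis by simp
qed

lemma main_loc:
  assumes ex: "ex_num V E \<ge> 1" and g: "min_resolving_function V E g" and x: "x \<in> V"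
    and cs: "major V E x \<or> interior_deg2 V E x \<or> (\<exists>v\<in>M1 V E. x \<in> T_sub V E v)"
  shows "g x = 0"
proof -
  have "card (ext_major V E) \<noteq> 0" using ex by (simp add: ex_num_def)
  then have "ext_major V E \<noteq> {}" by (metis card.empty)
  then obtain w0 where "w0 \<in> ext_major V E" by blast
  then have maj: "major V E w0" by (simp add: ext_major_def)
  have gr: "resolving_function V E g" and sg: "sum g V = frac_dim V E"
    using g by (auto simp: min_resolving_function_def)
  have gnn: "\<And>z. z \<in> V \<Longrightarrow> 0 \<le> g z" using gr by (simp add: resolving_function_def)
  have "frac_dim V E \<le> sum fA V" unfolding frac_dim_def
  proof (rule cInf_lower)
    show "sum fA V \<in> {sum g V |g. resolving_function V E g}" using fA_res[OF maj] by blast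
    show "bdd_below {sum g V |g. resolving_function V E g}"
    proof (rule bdd_belowI)
      fix y assume "y \<in> {sum g V |g. resolving_function V E g}"
      then obtain h where "y = sum h V" "resolving_function V E h" by blast
      then show "0 \<le> y" unfolding resolving_function_def by (simp add: sum_nonneg)
    qed
  qed
  then have up: "sum g V \<le> real (card A) / 2" using sg sum_fA_V by simp
  have split: "sum g V = sum g (V - U) + sum g U" using sum.subset_diff[OF U_V finV] .
  have lo: "real (card A) / 2 \<le> sum g U" using lower[OF gr] .
  have nn: "0 \<le> sum g (V - U)" using gnn by (intro sum_nonneg) auto
  have "sum g (V - U) = 0" using up split lo nn by linarith
  moreover have "finite (V - U)" using finV by simp
  moreover have "\<And>z. z \<in> V - U \<Longrightarrow> 0 \<le> g z" using gnn by simp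
  ultimately have zero: "\<forall>z\<in>V - U. g z = 0" using sum_nonneg_eq_0_iff[of "V - U" g] by simp
  have "x \<notin> U"
  proof
    assume "x \<in> U"
    then obtain v a where vW: "v \<in> W" and aG: "a \<in> G v" and xB: "x \<in> Bs v a" by (auto simp: U_def)
    have vm: "major V E v" using vW by (simp add: W_def)
    have e: "E v a" and mf: "\<And>z. z \<in> Bs v a \<Longrightarrow> \<not> major V E z" using aG by (auto simp: G_def)
    have vV: "v \<in> V" using vm major_V by blast
    show False
    proof (cases "major V E x")
      case True then show False using mf xB by blast
    next
      case nmx: False
      show False
      proof (cases "interior_deg2 V E x")
        case True
        obtain l xs where l: "terminal_of V E v l" "l \<in> Bs v a" "geo xs x l" "set xs \<subseteq> Bs v a"
          using leaf_beyond[OF vm aG xB] by blast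
        have "path V E x l xs" using l(3) geo_distinct[OF l(3)] geo_hd_last[OF l(3)]
          by (simp add: path_def geo_def)
        moreover have "length xs = Suc (d x l)" using l(3) by (simp add: geo_def)
        ultimately obtain z where "z \<in> set xs" "major V E z"
          using True l(1) unfolding interior_deg2_def by meson
        then show False using l(4) mf by blast
      next
        case False
        then obtain v0 where v0: "v0 \<in> M1 V E" and xT: "x \<in> T_sub V E v0" using cs nmx by blast
        have v0m: "major V E v0" and ter1: "ter V E v0 = 1" using v0 by (auto simp: M1_def ext_major_def)
        have "x \<noteq> v0" using nmx v0m by blast
        then obtain l xs where tl0: "terminal_of V E v0 l" and pth: "path V E v0 l xs" and xin: "x \<in> set xs"
          using xT by (auto simp: T_sub_def)
        have w: "walk V E xs" and dxs: "distinct xs" and hx: "hd xs = v0" and lx: "last xs = l"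
          using pth by (auto simp: path_def)
        obtain k where k: "k < length xs" "xs!k = x" using xin by (auto simp: in_set_conv_nth)
        have v0n: "v0 \<notin> Bs v a" using mf v0m by blast
        have lB: "l \<in> Bs v a"
        proof (rule ccontr)
          assume ln: "l \<notin> Bs v a"
          have t: "take (Suc k) xs = take k xs @ [x]" using k by (simp add: take_Suc_conv_app_nth)
          have "v \<in> set (butlast (take (Suc k) xs))"
          proof (rule cross_in[OF e])
            show "walk V E (take (Suc k) xs)" using walk_take[OF w] by simp
            show "hd (take (Suc k) xs) \<notin> Bs v a" using hx v0n k by (simp add: hd_take)
            show "last (take (Suc k) xs) \<in> Bs v a" using t xB by simp
          qed
          then have v1: "v \<in> set (take k xs)" using t by simp
          have "v \<in> set (tl (drop k xs))"
          proof (rule cross_out[OF e])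
            show "walk V E (drop k xs)" using walk_drop[OF w k(1)] .
            show "hd (drop k xs) \<in> Bs v a" using k xB by (simp add: hd_drop_conv_nth)
            show "last (drop k xs) \<notin> Bs v a" using k lx ln by simp
          qed
          then have v2: "v \<in> set (drop (Suc k) xs)" by (simp add: drop_Suc tl_drop)
          show False using set_take_disj_set_drop_if_distinct[OF dxs, of k "Suc k"] v1 v2 by auto
        qed
        have lV: "l \<in> V" using lB Bs_V by blast
        have v0V: "v0 \<in> V" using v0m major_V by blast
        have vv0: "v0 = v"
        proof (rule ccontr)
          assume ne: "v0 \<noteq> v"
          have "d v0 l = d v0 v + d v l" using sep[OF e lB v0V v0n] .
          moreover have "d v0 v \<noteq> 0" using d_zero v0V vV ne by metis
          moreover have "d l v0 < d l v" using tl0 vm ne unfolding terminal_of_def by auto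
          moreover have "d l v0 = d v0 l" "d l v = d v l" using d_sym lV v0V vV by auto
          ultimately show False by linarith
        qed
        have "2 \<le> card (G v)" using vW by (simp add: W_def)
        then obtain a1 a2 where a12: "a1 \<in> G v" "a2 \<in> G v" "a1 \<noteq> a2" using two_elems by blast
        have e12: "E v a1" "E v a2" using a12 by (auto simp: G_def)
        obtain l1 xs1 where l1: "terminal_of V E v l1" "l1 \<in> Bs v a1"
          using leaf_beyond[OF vm a12(1) in_own[OF e12(1)]] by blast
        obtain l2 xs2 where l2: "terminal_of V E v l2" "l2 \<in> Bs v a2"
          using leaf_beyond[OF vm a12(2) in_own[OF e12(2)]] by blast
        have "l1 \<noteq> l2" using br_disj[OF e12 a12(3)] l1(2) l2(2) by blast
        moreover have "{l. terminal_of V E v l} \<subseteq> V" by (auto simp: terminal_of_def leaf_def)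
        then have "finite {l. terminal_of V E v l}" using finV finite_subset by blast
        ultimately have "2 \<le> card {l. terminal_of V E v l}"
          using card_two[of "{l. terminal_of V E v l}" l1 l2] l1(1) l2(1) by simp
        then have "2 \<le> ter V E v" unfolding ter_def .
        then show False using ter1 vv0 by simp
      qed
    qed
  qed
  then show ?thesis using zero x by blast
qed

end

theorem corollary3p14:
  fixes V :: "'a set" and E :: "'a \<Rightarrow> 'a \<Rightarrow> bool" and g :: "'a \<Rightarrow> real" and x :: 'a
  assumes "is_tree V E"
    and "ex_num V E \<ge> 1"
    and "min_resolving_function V E g"
    and "x \<in> V"
    and "major V E x \<or> interior_deg2 V E x \<or> (\<exists>v\<in>M1 V E. x \<in> T_sub V E v)"
  shows "g x = 0"
  using tr.main_loc[OF tr.intro[OF assms(1)] assms(2-5)] .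

end
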